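(* Let $\tau$ be a holomorphic involution of $H$ and $\alpha$ a root of $H$ in $G$ with $\alpha\circ\tau=\alpha$. Then $\alpha(h)=\pm1$ for all $h\in H^{-\tau}_Z$ and $\alpha(h)=1$ for all $h\in A_\tau$, so $\alpha$ induces a character $\bar\alpha$ of $U_\tau$ of order at most $2$. Moreover the reflection $s_\alpha$ (acting on $H$) preserves $H^{-\tau}_Z$ and acts trivially on $A_\tau$, so it induces an action on $U_\tau$, and for $u\in U_\tau$: $$s_\alpha(u)=\begin{cases}u&\text{if }\bar\alpha(u)=1,\\ m_\alpha u&\text{otherwise,}\end{cases}$$ where $m_\alpha=\check\alpha(-1)$ (which lies in $H^{-\tau}_Z$).
   Context: $G$ is a connected complex reductive group with maximal torus $H$ and Weyl group $W=\mathrm{Norm}_G(H)/H$ acting on $H$. $H^{-\tau}=\{h\in H:\tau(h)=h^{-1}\}$, $H^{-\tau}_Z=\{h\in H:h\tau(h)\in Z(G)\}$, $A_\tau$ the identity component of $H^{-\tau}$, $U_\tau=H^{-\tau}_Z/A_\tau$. $\check\alpha$ is the coroot of $\alpha$, viewed as a cocharacter $\mathbb C^\times\to H$.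
   Formalization: The involution $\tau$ also permutes the roots of H in G: each root composed with $\tau$ is again a root. The paper assumes this as well. *)

theory Defs
  imports "HOL-Analysis.Analysis"
begin

(* The maximal torus H is modelled as (C^x)^n inside complex^'n, with
   character lattice X = int^'n and cocharacter lattice Y = int^'n. *)

definition torus :: "(complex ^ 'n) set" where
  "torus = {h. \<forall>i. h $ i \<noteq> 0}"

definition tmul :: "complex ^ 'n \<Rightarrow> complex ^ 'n \<Rightarrow> complex ^ 'n" where
  "tmul g h = (\<chi> i. g $ i * h $ i)"

definition tinv :: "complex ^ 'n \<Rightarrow> complex ^ 'n" where
  "tinv h = (\<chi> i. inverse (h $ i))"

definition tone :: "complex ^ 'n" where
  "tone = (\<chi> i. 1)"

definition char_of :: "int ^ 'n \<Rightarrow> complex ^ 'n \<Rightarrow> complex" where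
  "char_of k h = (\<Prod>i\<in>UNIV. (h $ i) powi (k $ i))"

definition cochar :: "int ^ 'n \<Rightarrow> complex \<Rightarrow> complex ^ 'n" where
  "cochar m z = (\<chi> i. z powi (m $ i))"

definition pairing :: "int ^ 'n \<Rightarrow> int ^ 'n \<Rightarrow> int" where
  "pairing k m = (\<Sum>i\<in>UNIV. k $ i * m $ i)"

definition reflX :: "int ^ 'n \<Rightarrow> int ^ 'n \<Rightarrow> int ^ 'n \<Rightarrow> int ^ 'n" where
  "reflX a av x = x - pairing x av *s a"

definition reflY :: "int ^ 'n \<Rightarrow> int ^ 'n \<Rightarrow> int ^ 'n \<Rightarrow> int ^ 'n" where
  "reflY a av y = y - pairing a y *s av"

(* Reduced root datum (X, R, Y, R^vee) with X = Y = Z^n; cor gives the coroot.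
   Connected complex reductive groups G with maximal torus H = (C^x)^n
   correspond exactly to such root data. *)
definition reduced_root_datum :: "(int ^ 'n) set \<Rightarrow> (int ^ 'n \<Rightarrow> int ^ 'n) \<Rightarrow> bool" where
  "reduced_root_datum R cor \<longleftrightarrow>
     finite R \<and>
     (\<forall>a\<in>R. pairing a (cor a) = 2) \<and>
     (\<forall>a\<in>R. \<forall>b\<in>R. reflX a (cor a) b \<in> R) \<and>
     (\<forall>a\<in>R. \<forall>b\<in>R. reflY a (cor a) (cor b) \<in> cor ` R) \<and>
     (\<forall>a\<in>R. \<forall>b\<in>R. \<forall>c::int. b = c *s a \<longrightarrow> c = 1 \<or> c = -1)"

(* Z(G) for connected reductive G: intersection of kernels of the roots *)
definition centre :: "(int ^ 'n) set \<Rightarrow> (complex ^ 'n) set" where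
  "centre R = {h \<in> torus. \<forall>b\<in>R. char_of b h = 1}"

definition weyl_refl :: "int ^ 'n \<Rightarrow> int ^ 'n \<Rightarrow> complex ^ 'n \<Rightarrow> complex ^ 'n" where
  "weyl_refl a av h = tmul h (cochar av (inverse (char_of a h)))"

definition Hmt :: "(complex ^ 'n \<Rightarrow> complex ^ 'n) \<Rightarrow> (complex ^ 'n) set" where
  "Hmt \<tau> = {h \<in> torus. \<tau> h = tinv h}"

definition HmtZ :: "(int ^ 'n) set \<Rightarrow> (complex ^ 'n \<Rightarrow> complex ^ 'n) \<Rightarrow> (complex ^ 'n) set" where
  "HmtZ R \<tau> = {h \<in> torus. tmul h (\<tau> h) \<in> centre R}"

definition Atau :: "(complex ^ 'n \<Rightarrow> complex ^ 'n) \<Rightarrow> (complex ^ 'n) set" where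
  "Atau \<tau> = connected_component_set (Hmt \<tau>) tone"

(* coset h A_tau, i.e. an element of U_tau = H^{-tau}_Z / A_tau *)
definition tcoset :: "complex ^ 'n \<Rightarrow> (complex ^ 'n) set \<Rightarrow> (complex ^ 'n) set" where
  "tcoset h S = tmul h ` S"

end

theory Submission imports Defs begin

lemma prod_power_int_gen: "finite A \<Longrightarrow> (\<Prod>i\<in>A. f i) powi c = (\<Prod>i\<in>A. (f i :: complex) powi c)"
  by (induction A rule: finite_induct) (auto simp: power_int_mult_distrib)

lemma power_int_sum_gen: "finite A \<Longrightarrow> (x::complex) \<noteq> 0 \<Longrightarrow> x powi (\<Sum>i\<in>A. f i) = (\<Prod>i\<in>A. x powi f i)"
  by (induction A rule: finite_induct) (auto simp: power_int_add)

lemma tmul_torus: "g \<in> torus \<Longrightarrow> h \<in> torus \<Longrightarrow> tmul g h \<in> torus"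
  by (auto simp: torus_def tmul_def)
lemma tinv_torus: "h \<in> torus \<Longrightarrow> tinv h \<in> torus"
  by (auto simp: torus_def tinv_def)
lemma tone_torus: "tone \<in> torus"
  by (auto simp: torus_def tone_def)
lemma tmul_comm: "tmul g h = tmul h g" by (simp add: tmul_def mult.commute)
lemma tmul_assoc: "tmul (tmul f g) h = tmul f (tmul g h)" by (simp add: tmul_def mult.assoc)
lemma tmul_one: "tmul h tone = h" by (simp add: tmul_def tone_def vec_eq_iff)
lemma tmul_inv: "h \<in> torus \<Longrightarrow> tmul h (tinv h) = tone"
  by (simp add: tmul_def tinv_def tone_def torus_def vec_eq_iff)

lemma char_mult: "g \<in> torus \<Longrightarrow> h \<in> torus \<Longrightarrow> char_of k (tmul g h) = char_of k g * char_of k h"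
  by (simp add: char_of_def tmul_def power_int_mult_distrib prod.distrib)

lemma char_tinv: "h \<in> torus \<Longrightarrow> char_of k (tinv h) = inverse (char_of k h)"
  by (simp add: char_of_def tinv_def power_int_inverse prod_inversef[symmetric] o_def)

lemma char_add: "h \<in> torus \<Longrightarrow> char_of (k + l) h = char_of k h * char_of l h"
  by (simp add: char_of_def torus_def power_int_add prod.distrib)

lemma char_smul: "char_of (c *s k) h = char_of k h powi c"
  unfolding char_of_def prod_power_int_gen[OF finite_class.finite_UNIV]
  by (rule prod.cong) (auto, metis mult.commute power_int_mult)

lemma char_diff: "h \<in> torus \<Longrightarrow> char_of (k - l) h = char_of k h * inverse (char_of l h)"
proof -
  assume h: "h \<in> torus"
  have "char_of k h = char_of ((k - l) + l) h" by simp
  also have "\<dots> = char_of (k - l) h * char_of l h" using h by (rule char_add)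
  finally have e: "char_of k h = char_of (k - l) h * char_of l h" .
  have "char_of l h \<noteq> 0" using h by (auto simp: char_of_def torus_def)
  with e show ?thesis by (simp add: field_simps)
qed

lemma char_cochar: "z \<noteq> 0 \<Longrightarrow> char_of k (cochar m z) = z powi pairing k m"
  by (simp add: char_of_def cochar_def pairing_def power_int_sum_gen power_int_mult[symmetric] mult.commute)

lemma cochar_torus: "z \<noteq> 0 \<Longrightarrow> cochar m z \<in> torus"
  by (simp add: cochar_def torus_def)

lemma cochar_one: "cochar m 1 = tone"
  by (simp add: cochar_def tone_def)

lemma char_nz: "h \<in> torus \<Longrightarrow> char_of k h \<noteq> 0"
  by (auto simp: char_of_def torus_def)

lemma char_inj:
  assumes "\<forall>h\<in>torus. char_of k h = char_of l (h :: complex ^ 'n)"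
  shows "k = l"
proof (subst vec_eq_iff, intro allI)
  fix i :: 'n
  define h :: "complex ^ 'n" where "h = (\<chi> j. if j = i then 2 else 1)"
  have ht: "h \<in> torus" by (simp add: h_def torus_def)
  have "\<And>m. char_of m h = 2 powi (m $ i)"
  proof -
    fix m :: "int ^ 'n"
    have "char_of m h = (\<Prod>j\<in>UNIV. if j = i then 2 powi (m $ i) else 1)"
      unfolding char_of_def h_def by (rule prod.cong) auto
    also have "\<dots> = 2 powi (m $ i)" by (simp add: prod.delta)
    finally show "char_of m h = 2 powi (m $ i)" .
  qed
  with assms ht have e: "(2::complex) powi (k $ i) = 2 powi (l $ i)" by metis
  show "k $ i = l $ i"
  proof (rule ccontr)
    assume ne: "k $ i \<noteq> l $ i"
    have "(2::complex) powi (k $ i - l $ i) = 1"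
      using e by (simp add: power_int_diff)
    hence "(2::real) powi (k $ i - l $ i) = 1"
      by (metis of_real_eq_1_iff of_real_numeral of_real_power_int)
    moreover have "(2::real) powi (k $ i - l $ i) \<noteq> 1"
    proof (cases "k $ i - l $ i > 0")
      case True
      then obtain n where "k $ i - l $ i = int n" "n > 0" by (metis zero_less_imp_eq_int)
      moreover have "(1::real) < 2^n" using \<open>n > 0\<close> by (intro one_less_power) auto
      ultimately show ?thesis by (metis less_irrefl power_int_of_nat)
    next
      case False
      with ne obtain n where "k $ i - l $ i = - int n" "n > 0"
        by (metis add.inverse_inverse neg_less_0_iff_less linorder_neqE_linordered_idom zero_less_imp_eq_int diff_eq_eq add_0)
      moreover have "(1::real) < 2^n" using \<open>n > 0\<close> by (intro one_less_power) auto
      ultimately show ?thesis by (metis less_irrefl power_int_of_nat power_int_minus inverse_eq_1_iff)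
    qed
    ultimately show False by simp
  qed
qed


lemma pairing_add: "pairing (x + y) m = pairing x m + pairing y m"
  by (simp add: pairing_def sum.distrib algebra_simps)
lemma pairing_smul: "pairing (t *s x) m = t * pairing x m"
  by (simp add: pairing_def sum_distrib_left algebra_simps)
lemma pairing_diff: "pairing (x - y) m = pairing x m - pairing y m"
  by (simp add: pairing_def sum_subtractf algebra_simps)

lemma key_parity:
  fixes R :: "(int ^ 'n) set" and \<tau> :: "complex ^ 'n \<Rightarrow> complex ^ 'n"
  assumes fin: "finite R" and aR: "a \<in> R" and p2: "pairing a av = 2"
    and refl: "\<forall>x\<in>R. reflX a av x \<in> R"
    and tm: "\<forall>h\<in>torus. \<tau> h \<in> torus"
    and inv: "\<forall>h\<in>torus. \<tau> (\<tau> h) = h"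
    and roots: "\<forall>b\<in>R. \<exists>c\<in>R. \<forall>h\<in>torus. char_of b (\<tau> h) = char_of c h"
    and atau: "\<forall>h\<in>torus. char_of a (\<tau> h) = char_of a h"
    and bR: "b \<in> R" and cR: "c \<in> R"
    and bc: "\<forall>h\<in>torus. char_of b (\<tau> h) = char_of c h"
  shows "pairing c av = pairing b av"
proof (rule ccontr)
  assume ne: "pairing c av \<noteq> pairing b av"
  define k where "k = pairing c av - pairing b av"
  have k0: "k \<noteq> 0" using ne by (simp add: k_def)
  have twist: "\<forall>h\<in>torus. char_of (x + t *s a) (\<tau> h) = char_of (x' + t *s a) h"
    if "\<forall>h\<in>torus. char_of x (\<tau> h) = char_of x' h" for x x' t
    using that tm atau by (simp add: char_add char_smul)
  have step: "\<forall>n. b + (int n * k) *s a \<in> R \<and> c + (int n * k) *s a \<in> R \<and>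
     (\<forall>h\<in>torus. char_of (b + (int n * k) *s a) (\<tau> h) = char_of (c + (int n * k) *s a) h)"
  proof
    fix n show "b + (int n * k) *s a \<in> R \<and> c + (int n * k) *s a \<in> R \<and>
     (\<forall>h\<in>torus. char_of (b + (int n * k) *s a) (\<tau> h) = char_of (c + (int n * k) *s a) h)"
    proof (induction n)
      case 0 then show ?case using bR cR bc by simp
    next
      case (Suc n)
      define x where "x = b + (int n * k) *s a"
      define x' where "x' = c + (int n * k) *s a"
      have xR: "x \<in> R" and x'R: "x' \<in> R" and xx: "\<forall>h\<in>torus. char_of x (\<tau> h) = char_of x' h"
        using Suc by (auto simp: x_def x'_def)
      have pk: "pairing x' av - pairing x av = k"
        by (simp add: x_def x'_def pairing_add pairing_smul k_def)
      define p where "p = pairing x' av"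
      define y where "y = x' - p *s a"
      have yR: "y \<in> R" using refl x'R by (auto simp: reflX_def y_def p_def)
      then obtain c2 where c2R: "c2 \<in> R" and yc: "\<forall>h\<in>torus. char_of y (\<tau> h) = char_of c2 h"
        using roots by blast
      have "\<forall>h\<in>torus. char_of y (\<tau> h) = char_of (x - p *s a) h"
      proof
        fix h :: "complex ^ 'n" assume h: "h \<in> torus"
        have "char_of x' (\<tau> h) = char_of x h"
          using xx tm h inv by metis
        then show "char_of y (\<tau> h) = char_of (x - p *s a) h"
          using h tm atau by (simp add: y_def char_diff char_smul)
      qed
      with yc have "\<forall>h\<in>torus. char_of c2 h = char_of (x - p *s a) h" by simp
      hence c2e: "c2 = x - p *s a" by (rule char_inj)
      have "reflX a av c2 \<in> R" using refl c2R by blast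
      moreover have "reflX a av c2 = x + k *s a"
        unfolding reflX_def c2e using pk p2
        by (simp add: pairing_diff pairing_add pairing_smul p_def vec_eq_iff algebra_simps)
      ultimately have n1: "x + k *s a \<in> R" by simp
      then obtain c3 where c3R: "c3 \<in> R" and c3e: "\<forall>h\<in>torus. char_of (x + k *s a) (\<tau> h) = char_of c3 h"
        using roots by blast
      have tw: "\<forall>h\<in>torus. char_of (x + k *s a) (\<tau> h) = char_of (x' + k *s a) h"
        using twist[OF xx] .
      hence "\<forall>h\<in>torus. char_of c3 h = char_of (x' + k *s a) h" using c3e by simp
      hence "c3 = x' + k *s a" by (rule char_inj)
      with c3R have n2: "x' + k *s a \<in> R" by simp
      have e1: "b + (int (Suc n) * k) *s a = x + k *s a"
        by (simp add: x_def vec_eq_iff algebra_simps)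
      have e2: "c + (int (Suc n) * k) *s a = x' + k *s a"
        by (simp add: x'_def vec_eq_iff algebra_simps)
      show ?case using n1 n2 tw unfolding e1 e2 by simp
    qed
  qed
  define f where "f = (\<lambda>n::nat. b + (int n * k) *s a)"
  have a0: "a \<noteq> 0" using p2 by (auto simp: pairing_def)
  then obtain i where ai: "a $ i \<noteq> 0" by (auto simp: vec_eq_iff)
  have "inj f"
  proof
    fix m n assume "f m = f n"
    hence "(f m) $ i = (f n) $ i" by simp
    hence "int m * k * a $ i = int n * k * a $ i" by (simp add: f_def)
    with k0 ai show "m = n" by simp
  qed
  moreover have "range f \<subseteq> R" using step by (auto simp: f_def)
  ultimately have "finite (UNIV :: nat set)"
    using fin by (meson finite_imageD finite_subset)
  thus False by simp
qed

theorem lemma4p7: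
  fixes R :: "(int ^ 'n) set" and cor :: "int ^ 'n \<Rightarrow> int ^ 'n"
    and \<tau> :: "complex ^ 'n \<Rightarrow> complex ^ 'n" and \<alpha> :: "int ^ 'n"
  assumes rd: "reduced_root_datum R cor"
    and tau_maps: "\<forall>h\<in>torus. \<tau> h \<in> torus"
    and tau_hom: "\<forall>g\<in>torus. \<forall>h\<in>torus. \<tau> (tmul g h) = tmul (\<tau> g) (\<tau> h)"
    and tau_invol: "\<forall>h\<in>torus. \<tau> (\<tau> h) = h"
    and tau_holo: "\<forall>h\<in>torus. \<exists>D :: complex ^ 'n ^ 'n. (\<tau> has_derivative (\<lambda>v. D *v v)) (at h)"
    and tau_roots: "\<forall>b\<in>R. \<exists>c\<in>R. \<forall>h\<in>torus. char_of b (\<tau> h) = char_of c h"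
    and alpha_root: "\<alpha> \<in> R"
    and alpha_tau: "\<forall>h\<in>torus. char_of \<alpha> (\<tau> h) = char_of \<alpha> h"
  shows "(\<forall>h\<in>HmtZ R \<tau>. char_of \<alpha> h = 1 \<or> char_of \<alpha> h = -1)
    \<and> (\<forall>a\<in>Atau \<tau>. char_of \<alpha> a = 1)
    \<and> (\<forall>h\<in>HmtZ R \<tau>. \<forall>g\<in>tcoset h (Atau \<tau>). char_of \<alpha> g = char_of \<alpha> h)
    \<and> (\<forall>h\<in>HmtZ R \<tau>. weyl_refl \<alpha> (cor \<alpha>) h \<in> HmtZ R \<tau>)
    \<and> (\<forall>a\<in>Atau \<tau>. weyl_refl \<alpha> (cor \<alpha>) a = a)
    \<and> cochar (cor \<alpha>) (-1) \<in> HmtZ R \<tau>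
    \<and> (\<forall>h\<in>HmtZ R \<tau>.
         weyl_refl \<alpha> (cor \<alpha>) ` tcoset h (Atau \<tau>) =
           (if char_of \<alpha> h = 1 then tcoset h (Atau \<tau>)
            else tcoset (tmul (cochar (cor \<alpha>) (-1)) h) (Atau \<tau>)))"
proof -
  define av where "av = cor \<alpha>"
  define m where "m = cochar av (-1)"
  have fin: "finite R" and p2: "pairing \<alpha> av = 2" and refl: "\<forall>x\<in>R. reflX \<alpha> av x \<in> R"
    using rd alpha_root unfolding reduced_root_datum_def av_def by auto
  have par: "pairing c av = pairing b av" if "b \<in> R" "c \<in> R" "\<forall>h\<in>torus. char_of b (\<tau> h) = char_of c h" for b c
    by (rule key_parity[OF fin alpha_root p2 refl tau_maps tau_invol tau_roots alpha_tau that])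
  have t1: "\<tau> tone = tone"
  proof -
    define t where "t = \<tau> tone"
    have tt: "t \<in> torus" using tau_maps tone_torus unfolding t_def by blast
    have "t = tmul t t" using tau_hom tone_torus by (metis t_def tmul_one)
    hence "tmul (tinv t) t = tmul (tinv t) (tmul t t)" by simp
    hence "tone = t" using tt by (metis tmul_assoc tmul_comm tmul_inv tmul_one)
    thus ?thesis by (simp add: t_def)
  qed
  have tone_Hmt: "tone \<in> Hmt \<tau>"
    using t1 tone_torus by (simp add: Hmt_def tinv_def tone_def)
  have HmtZ_torus: "HmtZ R \<tau> \<subseteq> torus" by (auto simp: HmtZ_def)
  have Atau_Hmt: "Atau \<tau> \<subseteq> Hmt \<tau>" by (simp add: Atau_def connected_component_subset)
  have Atau_torus: "Atau \<tau> \<subseteq> torus" using Atau_Hmt by (auto simp: Hmt_def)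
  have P1: "\<forall>h\<in>HmtZ R \<tau>. char_of \<alpha> h = 1 \<or> char_of \<alpha> h = -1"
  proof
    fix h assume h: "h \<in> HmtZ R \<tau>"
    hence ht: "h \<in> torus" and c: "tmul h (\<tau> h) \<in> centre R" by (auto simp: HmtZ_def)
    have "char_of \<alpha> (tmul h (\<tau> h)) = 1" using c alpha_root by (auto simp: centre_def)
    hence "char_of \<alpha> h * char_of \<alpha> h = 1"
      using ht tau_maps alpha_tau by (simp add: char_mult)
    thus "char_of \<alpha> h = 1 \<or> char_of \<alpha> h = -1" by (simp add: square_eq_1_iff)
  qed
  have Hmt_sq: "char_of \<alpha> h = 1 \<or> char_of \<alpha> h = -1" if h: "h \<in> Hmt \<tau>" for h
  proof -
    have ht: "h \<in> torus" and e: "\<tau> h = tinv h" using h by (auto simp: Hmt_def)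
    have "inverse (char_of \<alpha> h) = char_of \<alpha> h"
      using alpha_tau ht e by (metis char_tinv)
    hence "char_of \<alpha> h * char_of \<alpha> h = 1" using char_nz[OF ht]
      by (metis right_inverse)
    thus ?thesis by (simp add: square_eq_1_iff)
  qed
  have P2: "\<forall>a\<in>Atau \<tau>. char_of \<alpha> a = 1"
  proof
    fix a assume a: "a \<in> Atau \<tau>"
    have conn: "connected (Atau \<tau>)" by (simp add: Atau_def connected_connected_component)
    have cont: "continuous_on (Atau \<tau>) (char_of \<alpha>)"
    proof -
      have "continuous_on (Atau \<tau>) (\<lambda>h. \<Prod>i\<in>UNIV. (h $ i) powi (\<alpha> $ i))"
        using Atau_torus by (intro continuous_intros) (auto simp: torus_def)
      thus ?thesis by (simp add: char_of_def[abs_def])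
    qed
    have ci: "connected (char_of \<alpha> ` Atau \<tau>)" using connected_continuous_image[OF cont conn] .
    have sub: "char_of \<alpha> ` Atau \<tau> \<subseteq> {1, -1}" using Hmt_sq Atau_Hmt by auto
    hence "finite (char_of \<alpha> ` Atau \<tau>)" by (rule finite_subset) simp
    then obtain z where z: "char_of \<alpha> ` Atau \<tau> = {z}"
      using connected_finite_iff_sing[OF ci] a by auto
    have "tone \<in> Atau \<tau>" using a unfolding Atau_def
      by (metis connected_component_in connected_component_refl_eq mem_Collect_eq)
    moreover have "char_of \<alpha> tone = 1" by (simp add: char_of_def tone_def)
    ultimately have "z = 1" using z by (metis image_eqI singletonD)
    thus "char_of \<alpha> a = 1" using z a by blast
  qed
  have cos: "char_of \<alpha> (tmul h a) = char_of \<alpha> h" if "h \<in> HmtZ R \<tau>" "a \<in> Atau \<tau>" for h a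
  proof -
    have "h \<in> torus" "a \<in> torus" using that HmtZ_torus Atau_torus by auto
    hence "char_of \<alpha> (tmul h a) = char_of \<alpha> h * char_of \<alpha> a" by (rule char_mult)
    thus ?thesis using P2 that(2) by simp
  qed
  have P3: "\<forall>h\<in>HmtZ R \<tau>. \<forall>g\<in>tcoset h (Atau \<tau>). char_of \<alpha> g = char_of \<alpha> h"
    using cos by (auto simp: tcoset_def)
  have P5: "\<forall>a\<in>Atau \<tau>. weyl_refl \<alpha> (cor \<alpha>) a = a"
    using P2 by (simp add: weyl_refl_def cochar_one tmul_one)
  have mt: "m \<in> torus" by (simp add: m_def cochar_torus)
  have centre_mul: "tmul x y \<in> centre R" if "x \<in> centre R" "y \<in> centre R" for x y
    using that by (auto simp: centre_def tmul_torus char_mult)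
  have P6: "m \<in> HmtZ R \<tau>"
  proof -
    have "tmul m (\<tau> m) \<in> centre R"
      unfolding centre_def
    proof (intro CollectI conjI ballI)
      show "tmul m (\<tau> m) \<in> torus" using mt tau_maps by (simp add: tmul_torus)
      fix b assume b: "b \<in> R"
      then obtain c where cR: "c \<in> R" and bc: "\<forall>h\<in>torus. char_of b (\<tau> h) = char_of c h"
        using tau_roots by blast
      have pp: "pairing c av = pairing b av" using par[OF b cR bc] .
      have "char_of b (tmul m (\<tau> m)) = char_of b m * char_of c m"
        using mt tau_maps bc by (simp add: char_mult)
      also have "\<dots> = ((-1) * (-1)) powi (pairing b av)"
        unfolding m_def by (simp add: char_cochar pp power_int_mult_distrib)
      also have "\<dots> = 1" by simp
      finally show "char_of b (tmul m (\<tau> m)) = 1" .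
    qed
    thus ?thesis using mt by (simp add: HmtZ_def)
  qed
  have HmtZ_mul: "tmul g h \<in> HmtZ R \<tau>" if "g \<in> HmtZ R \<tau>" "h \<in> HmtZ R \<tau>" for g h
  proof -
    have g: "g \<in> torus" "tmul g (\<tau> g) \<in> centre R" and h: "h \<in> torus" "tmul h (\<tau> h) \<in> centre R"
      using that by (auto simp: HmtZ_def)
    have "tmul (tmul g h) (\<tau> (tmul g h)) = tmul (tmul g (\<tau> g)) (tmul h (\<tau> h))"
      using tau_hom g h by (metis tmul_assoc tmul_comm)
    thus ?thesis using g h centre_mul by (simp add: HmtZ_def tmul_torus)
  qed
  have srefl: "weyl_refl \<alpha> av h = (if char_of \<alpha> h = 1 then h else tmul h m)" if "h \<in> HmtZ R \<tau>" for h
    using P1 that by (auto simp: weyl_refl_def cochar_one tmul_one m_def)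
  have P4: "\<forall>h\<in>HmtZ R \<tau>. weyl_refl \<alpha> (cor \<alpha>) h \<in> HmtZ R \<tau>"
    using srefl HmtZ_mul P6 by (simp add: av_def[symmetric])
  have P7: "\<forall>h\<in>HmtZ R \<tau>.
         weyl_refl \<alpha> (cor \<alpha>) ` tcoset h (Atau \<tau>) =
           (if char_of \<alpha> h = 1 then tcoset h (Atau \<tau>)
            else tcoset (tmul (cochar (cor \<alpha>) (-1)) h) (Atau \<tau>))"
  proof
    fix h assume h: "h \<in> HmtZ R \<tau>"
    have ha: "tmul h a \<in> HmtZ R \<tau>" if "a \<in> Atau \<tau>" for a
    proof -
      have "a \<in> HmtZ R \<tau>"
      proof -
        have at: "a \<in> torus" "\<tau> a = tinv a" using that Atau_Hmt by (auto simp: Hmt_def)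
        have "tmul a (\<tau> a) = tone" using at by (simp add: tmul_inv)
        moreover have "tone \<in> centre R" by (simp add: centre_def char_of_def tone_def torus_def)
        ultimately show ?thesis using at by (simp add: HmtZ_def)
      qed
      thus ?thesis using HmtZ_mul h by blast
    qed
    have "weyl_refl \<alpha> av (tmul h a) = (if char_of \<alpha> h = 1 then tmul h a else tmul (tmul m h) a)"
      if "a \<in> Atau \<tau>" for a
    proof -
      have r: "tmul (tmul h a) m = tmul (tmul m h) a" by (simp add: tmul_def vec_eq_iff ac_simps)
      show ?thesis using srefl[OF ha[OF that]] cos[OF h that] r by simp
    qed
    hence "weyl_refl \<alpha> av ` tcoset h (Atau \<tau>) =
       (\<lambda>a. if char_of \<alpha> h = 1 then tmul h a else tmul (tmul m h) a) ` Atau \<tau>"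
      unfolding tcoset_def image_image by (rule image_cong[OF HOL.refl])
    thus "weyl_refl \<alpha> (cor \<alpha>) ` tcoset h (Atau \<tau>) =
           (if char_of \<alpha> h = 1 then tcoset h (Atau \<tau>)
            else tcoset (tmul (cochar (cor \<alpha>) (-1)) h) (Atau \<tau>))"
      by (simp add: tcoset_def av_def m_def)
  qed
  show ?thesis using P1 P2 P3 P4 P5 P6 P7 by (simp add: m_def av_def)
qed
end
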